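(* Consider any sequences $\{(x_k,y_k,\gamma_k)\}_{k\ge0}$, $\{(\tilde x_k,u_k,\tilde\gamma_k)\}_{k\ge1}$ generated by the inexact symmetric proximal ADMM described in the context, and let $z_k=(x_k,y_k,\gamma_k)$ ($k\ge0$), $\tilde z_k=(\tilde x_k,y_k,\tilde\gamma_k)$ ($k\ge1$). Then for every $z^*\in T^{-1}(0)$ and every $k\ge1$, $$\|z^*-z_k\|_M^2-\|z^*-z_{k-1}\|_M^2\le\|\tilde z_k-z_k\|_M^2-\|\tilde z_k-z_{k-1}\|_M^2.$$
   Context: Let $f:\mathbb{R}^n\to(-\infty,\infty]$ and $g:\mathbb{R}^p\to(-\infty,\infty]$ be proper closed convex functions, $A\in\mathbb{R}^{m\times n}$, $B\in\mathbb{R}^{m\times p}$, $b\in\mathbb{R}^m$ (problem: $\min\{f(x)+g(y):Ax+By=b\}$). Standing assumption: there exists $(x^*,y^*,\gamma^* )$ solving the Lagrangian system $0\in\partial f(x)-A^*\gamma$, $0\in\partial g(y)-B^*\gamma$, $0=Ax+By-b$. Here $\partial$ is the subdifferential, $A^*$ the transpose, $\mathbb{S}^n_{++}$ ($\mathbb{S}^p_+$) the symmetric positive definite (semidefinite) matrices, and $\|z\|_Q=\sqrt{\langle Qz,z\rangle}$ for $Q$ positive semidefinite. Algorithm (inexact symmetric proximal ADMM): given $(x_0,y_0,\gamma_0)\in\mathbb{R}^n\times\mathbb{R}^p\times\mathbb{R}^m$, $\beta>0$, $\tilde\sigma,\hat\sigma\in[0,1)$, $G\in\mathbb{S}^n_{++}$,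 $H\in\mathbb{S}^p_+$, and $(\tau,\theta)\in\mathcal R_{\tilde\sigma}:=\{(\tau,\theta):\tau\in(-1,1-\tilde\sigma),\ \tau+\theta>0,\ (1-\tau^2)(2-\tau-\theta-\tilde\sigma)-(1-\theta)^2(1-\tau-\tilde\sigma)>0\}$. For $k=1,2,\dots$: compute $(\tilde x_k,u_k)$ with $u_k\in\partial f(\tilde x_k)-A^*\tilde\gamma_k$ and $\|\tilde x_k-x_{k-1}+G^{-1}u_k\|_G^2\le\frac{\tilde\sigma}{\beta}\|\tilde\gamma_k-\gamma_{k-1}\|^2+\hat\sigma\|\tilde x_k-x_{k-1}\|_G^2$, where $\tilde\gamma_k=\gamma_{k-1}-\beta(A\tilde x_k+By_{k-1}-b)$; set $\gamma_{k-1/2}=\gamma_{k-1}-\tau\beta(A\tilde x_k+By_{k-1}-b)$; let $y_k$ be an optimal solution of $\min_y\{g(y)-\langle\gamma_{k-1/2},By\rangle+\frac\beta2\|A\tilde x_k+By-b\|^2+\frac12\|y-y_{k-1}\|_H^2\}$; set $x_k=x_{k-1}-G^{-1}u_k$ and $\gamma_k=\gamma_{k-1/2}-\theta\beta(A\tilde x_k+By_k-b)$. Definitions: $T(x,y,\gamma)=(\partial f(x)-A^*\gamma,\ \partial g(y)-B^*\gamma,\ Ax+By-b)$; $M=\begin{bmatrix}G&0&0\\0&H+\frac{(\tau-\tau\theta+\theta)\beta}{\tau+\theta}B^*B&-\frac{\tau}{\tau+\theta}B^*\\0&-\frac{\tau}{\tau+\theta}B&\frac{1}{(\tau+\theta)\beta}I\end{bmatrix}$.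 *)

theory Defs
  imports "HOL-Analysis.Analysis"
begin

definition proper_fun :: "('a \<Rightarrow> ereal) \<Rightarrow> bool" where
  "proper_fun f \<longleftrightarrow> (\<forall>x. f x \<noteq> -\<infinity>) \<and> (\<exists>x. f x \<noteq> \<infinity>)"

definition epigraph_e :: "('a \<Rightarrow> ereal) \<Rightarrow> ('a \<times> real) set" where
  "epigraph_e f = {(x, t). f x \<le> ereal t}"

definition closed_fun :: "('a::topological_space \<Rightarrow> ereal) \<Rightarrow> bool" where
  "closed_fun f \<longleftrightarrow> closed (epigraph_e f)"

definition convex_fun :: "('a::real_vector \<Rightarrow> ereal) \<Rightarrow> bool" where
  "convex_fun f \<longleftrightarrow> convex (epigraph_e f)"

definition subdiff :: "('a::real_inner \<Rightarrow> ereal) \<Rightarrow> 'a \<Rightarrow> 'a set" where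
  "subdiff f x = {v. f x \<noteq> \<infinity> \<and> f x \<noteq> -\<infinity> \<and>
                     (\<forall>y. f y \<ge> f x + ereal (v \<bullet> (y - x)))}"

definition sym_mat :: "real^'n^'n \<Rightarrow> bool" where
  "sym_mat Q \<longleftrightarrow> transpose Q = Q"

definition pos_def :: "real^'n^'n \<Rightarrow> bool" where
  "pos_def Q \<longleftrightarrow> sym_mat Q \<and> (\<forall>v. v \<noteq> 0 \<longrightarrow> v \<bullet> (Q *v v) > 0)"

definition pos_semidef :: "real^'n^'n \<Rightarrow> bool" where
  "pos_semidef Q \<longleftrightarrow> sym_mat Q \<and> (\<forall>v. v \<bullet> (Q *v v) \<ge> 0)"

definition qnorm2 :: "real^'n^'n \<Rightarrow> real^'n \<Rightarrow> real" where
  "qnorm2 Q v = (Q *v v) \<bullet> v"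

definition region :: "real \<Rightarrow> real \<Rightarrow> real \<Rightarrow> bool" where
  "region \<sigma> \<tau> \<theta> \<longleftrightarrow> -1 < \<tau> \<and> \<tau> < 1 - \<sigma> \<and> \<tau> + \<theta> > 0 \<and>
     (1 - \<tau>^2) * (2 - \<tau> - \<theta> - \<sigma>) - (1 - \<theta>)^2 * (1 - \<tau> - \<sigma>) > 0"

text \<open>Zeros of the operator T: \<open>0 \<in> T(x,y,\<gamma>)\<close>.\<close>
definition T_zero :: "(real^'n \<Rightarrow> ereal) \<Rightarrow> (real^'p \<Rightarrow> ereal) \<Rightarrow> real^'n^'m \<Rightarrow> real^'p^'m
    \<Rightarrow> real^'m \<Rightarrow> real^'n \<Rightarrow> real^'p \<Rightarrow> real^'m \<Rightarrow> bool" where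
  "T_zero f g A B b x y \<gamma> \<longleftrightarrow>
     transpose A *v \<gamma> \<in> subdiff f x \<and> transpose B *v \<gamma> \<in> subdiff g y \<and> A *v x + B *v y - b = 0"

text \<open>\<open>\<parallel>(dx,dy,d\<gamma>)\<parallel>_M^2 = \<langle>M(dx,dy,d\<gamma>),(dx,dy,d\<gamma>)\<rangle>\<close> with the block matrix M
  written out blockwise.\<close>
definition Mnorm2 :: "real^'n^'n \<Rightarrow> real^'p^'p \<Rightarrow> real^'p^'m \<Rightarrow> real \<Rightarrow> real \<Rightarrow> real
    \<Rightarrow> real^'n \<Rightarrow> real^'p \<Rightarrow> real^'m \<Rightarrow> real" where
  "Mnorm2 G H B \<beta> \<tau> \<theta> dx dy dg =
     (G *v dx) \<bullet> dx
   + ((H *v dy) + ((\<tau> - \<tau> * \<theta> + \<theta>) * \<beta> / (\<tau> + \<theta>)) *\<^sub>R (transpose B *v (B *v dy))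
       - (\<tau> / (\<tau> + \<theta>)) *\<^sub>R (transpose B *v dg)) \<bullet> dy
   + (- (\<tau> / (\<tau> + \<theta>)) *\<^sub>R (B *v dy) + (1 / ((\<tau> + \<theta>) * \<beta>)) *\<^sub>R dg) \<bullet> dg"

end

theory Submission
  imports Defs
begin


lemma posdef_inv:
  fixes G :: "real^'n^'n"
  assumes "pos_def G"
  shows "G *v (matrix_inv G *v w) = w"
proof -
  have ker: "\<forall>x. G *v x = 0 \<longrightarrow> x = 0"
    using assms unfolding pos_def_def by (metis inner_zero_right less_irrefl)
  then have "invertible G"
    using invertible_left_inverse matrix_left_invertible_ker by blast
  then have "\<exists>A'. G ** A' = mat 1 \<and> A' ** G = mat 1" unfolding invertible_def by blast
  then have "G ** matrix_inv G = mat 1 \<and> matrix_inv G ** G = mat 1"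
    unfolding matrix_inv_def by (rule someI_ex)
  then show ?thesis by (metis matrix_vector_mul_assoc matrix_vector_mul_lid)
qed

lemma subdiff_mono:
  assumes "a \<in> subdiff f x" "c \<in> subdiff f z"
  shows "(a - c) \<bullet> (x - z) \<ge> 0"
proof -
  obtain p where p: "f x = ereal p" using assms(1) unfolding subdiff_def by (cases "f x") auto
  obtain q where q: "f z = ereal q" using assms(2) unfolding subdiff_def by (cases "f z") auto
  have "f x + ereal (a \<bullet> (z - x)) \<le> f z" using assms(1) unfolding subdiff_def by blast
  then have 1: "q \<ge> p + a \<bullet> (z - x)" using p q by simp
  have "f z + ereal (c \<bullet> (x - z)) \<le> f x" using assms(2) unfolding subdiff_def by blast
  then have 2: "p \<ge> q + c \<bullet> (x - z)" using p q by simp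
  have "(a - c) \<bullet> (x - z) = - (a \<bullet> (z - x)) - c \<bullet> (x - z)"
    by (simp add: inner_diff_left inner_diff_right)
  then show ?thesis using 1 2 by linarith
qed

lemma convex_fun_ineq:
  assumes "convex_fun g" "g y = ereal a" "g w = ereal c" "0 \<le> t" "t \<le> 1"
  shows "g (y + t *\<^sub>R (w - y)) \<le> ereal ((1 - t) * a + t * c)"
proof -
  have "(y, a) \<in> epigraph_e g" "(w, c) \<in> epigraph_e g"
    using assms unfolding epigraph_e_def by auto
  then have "(1 - t) *\<^sub>R (y, a) + t *\<^sub>R (w, c) \<in> epigraph_e g"
    using assms unfolding convex_fun_def by (intro convexD) auto
  moreover have "y + t *\<^sub>R (w - y) = (1 - t) *\<^sub>R y + t *\<^sub>R w"
    by (simp add: algebra_simps)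
  ultimately show ?thesis unfolding epigraph_e_def by auto
qed

lemma opt_subdiff_gen:
  fixes g :: "'a::real_inner \<Rightarrow> ereal"
  assumes pr: "proper_fun g" and cv: "convex_fun g"
    and opt: "\<And>w. g y + ereal (q y) \<le> g w + ereal (q w)"
    and quad: "\<And>w t. q (y + t *\<^sub>R (w - y)) = q y - t * (v \<bullet> (w - y)) + t^2 * C w"
  shows "v \<in> subdiff g y"
proof -
  obtain w0 where w0: "g w0 \<noteq> \<infinity>" using pr unfolding proper_fun_def by auto
  have nm: "g y \<noteq> -\<infinity>" using pr unfolding proper_fun_def by auto
  have "g y \<noteq> \<infinity>"
  proof
    assume "g y = \<infinity>"
    then have "g w0 + ereal (q w0) = \<infinity>" using opt[of w0] by simp
    then show False using w0 pr unfolding proper_fun_def by (cases "g w0") auto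
  qed
  with nm obtain a where a: "g y = ereal a" by (cases "g y") auto
  have "g w \<ge> g y + ereal (v \<bullet> (w - y))" for w
  proof (cases "g w = \<infinity>")
    case True then show ?thesis by simp
  next
    case False
    with pr obtain c where c: "g w = ereal c" unfolding proper_fun_def by (cases "g w") auto
    have key: "a \<le> c - v \<bullet> (w - y) + t * C w" if t: "0 < t" "t \<le> 1" for t
    proof -
      have le: "g (y + t *\<^sub>R (w - y)) \<le> ereal ((1 - t) * a + t * c)"
        using convex_fun_ineq[OF cv a c] t by auto
      moreover have "g (y + t *\<^sub>R (w - y)) \<noteq> -\<infinity>" using pr unfolding proper_fun_def by auto
      ultimately obtain m where m: "g (y + t *\<^sub>R (w - y)) = ereal m" "m \<le> (1 - t) * a + t * c"
        by (cases "g (y + t *\<^sub>R (w - y))") auto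
      have "a + q y \<le> m + q (y + t *\<^sub>R (w - y))" using opt[of "y + t *\<^sub>R (w - y)"] a m by simp
      then have "a + q y \<le> (1 - t) * a + t * c + q y - t * (v \<bullet> (w - y)) + t^2 * C w"
        using m quad by simp
      then have "t * a \<le> t * (c - v \<bullet> (w - y) + t * C w)"
        by (simp add: algebra_simps power2_eq_square)
      then show ?thesis using t by simp
    qed
    have "a \<le> c - v \<bullet> (w - y)"
    proof (rule ccontr)
      assume na: "\<not> ?thesis"
      define e where "e = a - (c - v \<bullet> (w - y))"
      have e: "e > 0" using na e_def by simp
      show False
      proof (cases "C w \<le> 0")
        case True
        then show ?thesis using key[of 1] e e_def by simp
      next
        case False
        define t where "t = min 1 (e / (2 * C w))"
        have t: "0 < t" "t \<le> 1" using e False t_def by auto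
        have "t * C w \<le> e / (2 * C w) * C w"
          using False t_def by (intro mult_right_mono) auto
        also have "\<dots> = e / 2" using False by simp
        finally show False using key[OF t] e e_def by simp
      qed
    qed
    then show ?thesis using a c by simp
  qed
  then show ?thesis unfolding subdiff_def using a by auto
qed



lemma sym_inner:
  fixes H :: "real^'p^'p"
  assumes "sym_mat H"
  shows "(H *v a) \<bullet> c = (H *v c) \<bullet> a"
proof -
  have "(H *v a) \<bullet> c = c \<bullet> (H *v a)" by (simp add: inner_commute)
  also have "\<dots> = (c v* H) \<bullet> a" by (simp add: dot_lmul_matrix)
  also have "c v* H = transpose H *v c" by simp
  also have "\<dots> = H *v c" using assms unfolding sym_mat_def by simp
  finally show ?thesis .
qed

lemma quad_expand:
  fixes H :: "real^'p^'p" and B :: "real^'p^'m" and a b \<gamma>h :: "real^'m" and y0 y w :: "real^'p" and \<beta> t :: real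
  assumes "sym_mat H"
  defines "q \<equiv> (\<lambda>v. - (\<gamma>h \<bullet> (B *v v)) + \<beta> / 2 * (norm (a + B *v v - b))^2
                      + 1 / 2 * qnorm2 H (v - y0))"
  shows "q (y + t *\<^sub>R (w - y)) = q y - t * ((transpose B *v \<gamma>h - \<beta> *\<^sub>R (transpose B *v (a + B *v y - b)) + H *v (y0 - y)) \<bullet> (w - y))
           + t^2 * (\<beta> / 2 * (norm (B *v (w - y)))^2 + 1 / 2 * qnorm2 H (w - y))"
proof -
  define d where "d = w - y"
  define r where "r = a + B *v y - b"
  define e where "e = y - y0"
  have 1: "a + B *v (y + t *\<^sub>R d) - b = r + t *\<^sub>R (B *v d)"
    unfolding r_def by (simp add: matrix_vector_right_distrib matrix_vector_mult_scaleR algebra_simps)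
  have 2: "y + t *\<^sub>R d - y0 = e + t *\<^sub>R d" unfolding e_def by simp
  have s: "(H *v d) \<bullet> e = (H *v e) \<bullet> d" using sym_inner[OF assms(1)] .
  have "q (y + t *\<^sub>R d) = - (\<gamma>h \<bullet> (B *v y)) - t * (\<gamma>h \<bullet> (B *v d)) + \<beta> / 2 * ((r + t *\<^sub>R (B *v d)) \<bullet> (r + t *\<^sub>R (B *v d)))
      + 1/2 * ((H *v (e + t *\<^sub>R d)) \<bullet> (e + t *\<^sub>R d))"
    unfolding q_def 1 2 qnorm2_def power2_norm_eq_inner
    by (simp add: matrix_vector_right_distrib matrix_vector_mult_scaleR inner_add_right)
  also have "\<dots> = - (\<gamma>h \<bullet> (B *v y)) - t * (\<gamma>h \<bullet> (B *v d)) + \<beta> / 2 * (r \<bullet> r) + t * \<beta> * (r \<bullet> (B *v d))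
      + t^2 * (\<beta> / 2 * ((B *v d) \<bullet> (B *v d))) + 1/2 * ((H *v e) \<bullet> e) + t * ((H *v e) \<bullet> d)
      + t^2 * (1/2 * ((H *v d) \<bullet> d))"
    using s by (simp add: matrix_vector_right_distrib matrix_vector_mult_scaleR inner_add_right
        inner_add_left inner_commute[of "B *v d" r] algebra_simps power2_eq_square)
  finally have L: "q (y + t *\<^sub>R d) = \<dots>" .
  have R0: "q y = - (\<gamma>h \<bullet> (B *v y)) + \<beta> / 2 * (r \<bullet> r) + 1/2 * ((H *v e) \<bullet> e)"
    unfolding q_def r_def e_def qnorm2_def power2_norm_eq_inner by simp
  have V: "(transpose B *v \<gamma>h - \<beta> *\<^sub>R (transpose B *v r) + H *v (y0 - y)) \<bullet> d
      = \<gamma>h \<bullet> (B *v d) - \<beta> * (r \<bullet> (B *v d)) - (H *v e) \<bullet> d"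
    unfolding e_def
    by (simp add: inner_diff_left dot_lmul_matrix matrix_vector_mult_diff_distrib algebra_simps)
  show ?thesis
    unfolding d_def[symmetric] r_def[symmetric] L R0 V qnorm2_def power2_norm_eq_inner
    by (simp add: algebra_simps)
qed



definition Mbil :: "real^'n^'n \<Rightarrow> real^'p^'p \<Rightarrow> real^'p^'m \<Rightarrow> real \<Rightarrow> real \<Rightarrow> real
    \<Rightarrow> real^'n \<Rightarrow> real^'p \<Rightarrow> real^'m \<Rightarrow> real^'n \<Rightarrow> real^'p \<Rightarrow> real^'m \<Rightarrow> real" where
  "Mbil G H B \<beta> \<tau> \<theta> dx dy dg ex ey eg =
     (G *v dx) \<bullet> ex
   + ((H *v dy) + ((\<tau> - \<tau> * \<theta> + \<theta>) * \<beta> / (\<tau> + \<theta>)) *\<^sub>R (transpose B *v (B *v dy))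
       - (\<tau> / (\<tau> + \<theta>)) *\<^sub>R (transpose B *v dg)) \<bullet> ey
   + (- (\<tau> / (\<tau> + \<theta>)) *\<^sub>R (B *v dy) + (1 / ((\<tau> + \<theta>) * \<beta>)) *\<^sub>R dg) \<bullet> eg"

lemma Mnorm2_Mbil: "Mnorm2 G H B \<beta> \<tau> \<theta> dx dy dg = Mbil G H B \<beta> \<tau> \<theta> dx dy dg dx dy dg"
  unfolding Mnorm2_def Mbil_def ..

lemma Mbil_diff1: "Mbil G H B \<beta> \<tau> \<theta> (a1 - c1) (a2 - c2) (a3 - c3) ex ey eg
   = Mbil G H B \<beta> \<tau> \<theta> a1 a2 a3 ex ey eg - Mbil G H B \<beta> \<tau> \<theta> c1 c2 c3 ex ey eg"
  unfolding Mbil_def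
  by (simp add: matrix_vector_mult_diff_distrib inner_diff_left scaleR_diff_right algebra_simps del: transpose_matrix_vector)

lemma Mbil_diff2: "Mbil G H B \<beta> \<tau> \<theta> dx dy dg (a1 - c1) (a2 - c2) (a3 - c3)
   = Mbil G H B \<beta> \<tau> \<theta> dx dy dg a1 a2 a3 - Mbil G H B \<beta> \<tau> \<theta> dx dy dg c1 c2 c3"
  unfolding Mbil_def
  by (simp add: inner_diff_right algebra_simps del: transpose_matrix_vector)

lemma Mbil_sym:
  assumes "sym_mat G" "sym_mat H"
  shows "Mbil G H B \<beta> \<tau> \<theta> dx dy dg ex ey eg = Mbil G H B \<beta> \<tau> \<theta> ex ey eg dx dy dg"
proof -
  have 1: "(G *v dx) \<bullet> ex = (G *v ex) \<bullet> dx" using sym_inner[OF assms(1)] .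
  have 2: "(H *v dy) \<bullet> ey = (H *v ey) \<bullet> dy" using sym_inner[OF assms(2)] .
  have 3: "(transpose B *v (B *v dy)) \<bullet> ey = (transpose B *v (B *v ey)) \<bullet> dy"
    by (metis dot_lmul_matrix inner_commute transpose_matrix_vector)
  have 4: "(transpose B *v dg) \<bullet> ey = (B *v ey) \<bullet> dg"
    by (metis dot_lmul_matrix inner_commute transpose_matrix_vector)
  have 5: "(transpose B *v eg) \<bullet> dy = (B *v dy) \<bullet> eg"
    by (metis dot_lmul_matrix inner_commute transpose_matrix_vector)
  show ?thesis unfolding Mbil_def
    using 1 2 3 4 5
    by (simp add: inner_add_left inner_diff_left inner_commute[of dg eg] del: transpose_matrix_vector)
qed

lemma Mnorm2_key:
  assumes "sym_mat G" "sym_mat H"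
  shows "Mnorm2 G H B \<beta> \<tau> \<theta> (p1 - c1) (p2 - c2) (p3 - c3) - Mnorm2 G H B \<beta> \<tau> \<theta> (p1 - d1) (p2 - d2) (p3 - d3)
    - (Mnorm2 G H B \<beta> \<tau> \<theta> (q1 - c1) (q2 - c2) (q3 - c3) - Mnorm2 G H B \<beta> \<tau> \<theta> (q1 - d1) (q2 - d2) (q3 - d3))
    = - 2 * Mbil G H B \<beta> \<tau> \<theta> (d1 - c1) (d2 - c2) (d3 - c3) (q1 - p1) (q2 - p2) (q3 - p3)"
  unfolding Mnorm2_Mbil Mbil_diff1 Mbil_diff2
  using Mbil_sym[OF assms, of B \<beta> \<tau> \<theta>]
  by (smt (verit))



theorem lemma2p4:
  fixes f :: "real^'n \<Rightarrow> ereal" and g :: "real^'p \<Rightarrow> ereal"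
    and A :: "real^'n^'m" and B :: "real^'p^'m" and b :: "real^'m"
    and G :: "real^'n^'n" and H :: "real^'p^'p"
    and \<beta> \<sigma>t \<sigma>h \<tau> \<theta> :: real
    and x :: "nat \<Rightarrow> real^'n" and y :: "nat \<Rightarrow> real^'p" and \<gamma> :: "nat \<Rightarrow> real^'m"
    and xt :: "nat \<Rightarrow> real^'n" and u :: "nat \<Rightarrow> real^'n" and \<gamma>t :: "nat \<Rightarrow> real^'m"
    and xs :: "real^'n" and ys :: "real^'p" and \<gamma>s :: "real^'m"
    and k :: nat
  assumes f: "proper_fun f" "closed_fun f" "convex_fun f"
    and g: "proper_fun g" "closed_fun g" "convex_fun g"
    and sol_exists: "\<exists>x0 y0 \<gamma>0. T_zero f g A B b x0 y0 \<gamma>0"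
    and \<beta>: "\<beta> > 0"
    and \<sigma>t: "0 \<le> \<sigma>t" "\<sigma>t < 1" and \<sigma>h: "0 \<le> \<sigma>h" "\<sigma>h < 1"
    and G: "pos_def G" and H: "pos_semidef H"
    and reg: "region \<sigma>t \<tau> \<theta>"
    and gt: "\<And>j. j \<ge> 1 \<Longrightarrow> \<gamma>t j = \<gamma> (j - 1) - \<beta> *\<^sub>R (A *v xt j + B *v y (j - 1) - b)"
    and u: "\<And>j. j \<ge> 1 \<Longrightarrow> u j + transpose A *v \<gamma>t j \<in> subdiff f (xt j)"
    and inexact: "\<And>j. j \<ge> 1 \<Longrightarrow>
        qnorm2 G (xt j - x (j - 1) + matrix_inv G *v u j)
          \<le> \<sigma>t / \<beta> * (norm (\<gamma>t j - \<gamma> (j - 1)))^2 + \<sigma>h * qnorm2 G (xt j - x (j - 1))"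
    and ystep: "\<And>j w. j \<ge> 1 \<Longrightarrow>
        (let \<gamma>half = \<gamma> (j - 1) - (\<tau> * \<beta>) *\<^sub>R (A *v xt j + B *v y (j - 1) - b);
             obj = (\<lambda>v. g v + ereal (- (\<gamma>half \<bullet> (B *v v))
                      + \<beta> / 2 * (norm (A *v xt j + B *v v - b))^2
                      + 1 / 2 * qnorm2 H (v - y (j - 1))))
         in obj (y j) \<le> obj w)"
    and xstep: "\<And>j. j \<ge> 1 \<Longrightarrow> x j = x (j - 1) - matrix_inv G *v u j"
    and gstep: "\<And>j. j \<ge> 1 \<Longrightarrow>
        \<gamma> j = (\<gamma> (j - 1) - (\<tau> * \<beta>) *\<^sub>R (A *v xt j + B *v y (j - 1) - b))
               - (\<theta> * \<beta>) *\<^sub>R (A *v xt j + B *v y j - b)"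
    and zs: "T_zero f g A B b xs ys \<gamma>s"
    and k: "k \<ge> 1"
  shows "Mnorm2 G H B \<beta> \<tau> \<theta> (xs - x k) (ys - y k) (\<gamma>s - \<gamma> k)
         - Mnorm2 G H B \<beta> \<tau> \<theta> (xs - x (k - 1)) (ys - y (k - 1)) (\<gamma>s - \<gamma> (k - 1))
       \<le> Mnorm2 G H B \<beta> \<tau> \<theta> (xt k - x k) (y k - y k) (\<gamma>t k - \<gamma> k)
         - Mnorm2 G H B \<beta> \<tau> \<theta> (xt k - x (k - 1)) (y k - y (k - 1)) (\<gamma>t k - \<gamma> (k - 1))"
proof -
  have k1: "1 \<le> k" using k .
  have tp: "\<tau> + \<theta> > 0" using reg unfolding region_def by auto
  define x0 where "x0 = x (k - 1)"
  define x1 where "x1 = x k"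
  define y0 where "y0 = y (k - 1)"
  define y1 where "y1 = y k"
  define g0 where "g0 = \<gamma> (k - 1)"
  define g1 where "g1 = \<gamma> k"
  define xk where "xk = xt k"
  define gk where "gk = \<gamma>t k"
  define uk where "uk = u k"
  define r1 where "r1 = A *v xk + B *v y0 - b"
  define r2 where "r2 = A *v xk + B *v y1 - b"
  define gh where "gh = g0 - (\<tau> * \<beta>) *\<^sub>R r1"
  have gk_eq: "gk = g0 - \<beta> *\<^sub>R r1" using gt[OF k1] unfolding gk_def g0_def r1_def xk_def y0_def .
  have g1_eq: "g1 = gh - (\<theta> * \<beta>) *\<^sub>R r2" using gstep[OF k1]
    unfolding g1_def gh_def g0_def r1_def r2_def xk_def y0_def y1_def .
  have x1_eq: "x1 = x0 - matrix_inv G *v uk" using xstep[OF k1] unfolding x1_def x0_def uk_def .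
  have symG: "sym_mat G" using G unfolding pos_def_def by auto
  have symH: "sym_mat H" using H unfolding pos_semidef_def by auto
  have Gx: "G *v (x0 - x1) = uk" using x1_eq posdef_inv[OF G] by simp
  have F1: "uk + transpose A *v gk \<in> subdiff f xk" using u[OF k1] unfolding uk_def gk_def xk_def .
  have Fs1: "transpose A *v \<gamma>s \<in> subdiff f xs" and Fs2: "transpose B *v \<gamma>s \<in> subdiff g ys"
    and Fs3: "A *v xs + B *v ys - b = 0" using zs unfolding T_zero_def by auto
  define q where "q = (\<lambda>v. - (gh \<bullet> (B *v v)) + \<beta> / 2 * (norm (A *v xk + B *v v - b))^2
                      + 1 / 2 * qnorm2 H (v - y0))"
  define vv where "vv = transpose B *v gh - \<beta> *\<^sub>R (transpose B *v r2) + H *v (y0 - y1)"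
  have opt: "g y1 + ereal (q y1) \<le> g w + ereal (q w)" for w
    using ystep[OF k1, of w] unfolding Let_def q_def gh_def y1_def y0_def g0_def r1_def xk_def
    by simp
  have F3: "vv \<in> subdiff g y1"
  proof (rule opt_subdiff_gen[OF g(1) g(3) opt])
    fix w t
    show "q (y1 + t *\<^sub>R (w - y1)) = q y1 - t * (vv \<bullet> (w - y1)) +
        t\<^sup>2 * (\<beta> / 2 * (norm (B *v (w - y1)))^2 + 1 / 2 * qnorm2 H (w - y1))"
      unfolding q_def vv_def r2_def using quad_expand[OF symH] by blast
  qed
  have M1: "(uk + transpose A *v gk - transpose A *v \<gamma>s) \<bullet> (xk - xs) \<ge> 0"
    using subdiff_mono[OF F1 Fs1] by simp
  have M2: "(vv - transpose B *v \<gamma>s) \<bullet> (y1 - ys) \<ge> 0"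
    using subdiff_mono[OF F3 Fs2] by simp
  define dy where "dy = y0 - y1"
  have r1_eq: "r1 = r2 + B *v dy" unfolding r1_def r2_def dy_def
    by (simp add: matrix_vector_mult_diff_distrib algebra_simps)
  have dg: "g0 - g1 = (\<tau> * \<beta>) *\<^sub>R r1 + (\<theta> * \<beta>) *\<^sub>R r2" using g1_eq unfolding gh_def by simp
  define s where "s = \<tau> / (\<tau> + \<theta>)"
  define cc where "cc = (\<tau> - \<tau> * \<theta> + \<theta>) * \<beta> / (\<tau> + \<theta>)"
  define kk where "kk = 1 / ((\<tau> + \<theta>) * \<beta>)"
  have bn: "\<beta> \<noteq> 0" and tn: "\<tau> + \<theta> \<noteq> 0" using \<beta> tp by auto
  have c1: "kk * (\<tau> * \<beta>) = s" unfolding kk_def s_def using bn tn by simp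
  have c2: "kk * (\<tau> * \<beta>) + kk * (\<theta> * \<beta>) = 1" unfolding kk_def using bn tn
    by (simp add: add_divide_distrib[symmetric] distrib_left[symmetric] distrib_right[symmetric])
  have c3: "cc - s * (\<tau> * \<beta>) = (1 - \<tau>) * \<beta>"
  proof -
    have "cc - s * (\<tau> * \<beta>) = ((\<tau> - \<tau> * \<theta> + \<theta>) * \<beta> - \<tau> * (\<tau> * \<beta>)) / (\<tau> + \<theta>)"
      unfolding cc_def s_def by (simp add: diff_divide_distrib)
    also have "(\<tau> - \<tau> * \<theta> + \<theta>) * \<beta> - \<tau> * (\<tau> * \<beta>) = ((1 - \<tau>) * \<beta>) * (\<tau> + \<theta>)"
      by (simp add: algebra_simps)
    also have "((1 - \<tau>) * \<beta>) * (\<tau> + \<theta>) / (\<tau> + \<theta>) = (1 - \<tau>) * \<beta>"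
      using tn by simp
    finally show ?thesis .
  qed
  have c4: "s * (\<tau> * \<beta>) + s * (\<theta> * \<beta>) = \<tau> * \<beta>"
  proof -
    have "s * (\<tau> * \<beta>) + s * (\<theta> * \<beta>) = (s * (\<tau> + \<theta>)) * \<beta>" by (simp add: algebra_simps)
    also have "s * (\<tau> + \<theta>) = \<tau>" unfolding s_def using tn by simp
    finally show ?thesis .
  qed
  have Q: "- s *\<^sub>R (B *v dy) + kk *\<^sub>R (g0 - g1) = r2"
  proof -
    have "- s *\<^sub>R (B *v dy) + kk *\<^sub>R (g0 - g1)
        = (kk * (\<tau> * \<beta>) - s) *\<^sub>R (B *v dy) + (kk * (\<tau> * \<beta>) + kk * (\<theta> * \<beta>)) *\<^sub>R r2"
      unfolding dg r1_eq by (simp add: algebra_simps)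
    then show ?thesis using c1 c2 by simp
  qed
  have P: "H *v dy + cc *\<^sub>R (transpose B *v (B *v dy)) - s *\<^sub>R (transpose B *v (g0 - g1))
      = vv - transpose B *v gk"
  proof -
    have "H *v dy + cc *\<^sub>R (transpose B *v (B *v dy)) - s *\<^sub>R (transpose B *v (g0 - g1))
      = H *v dy + (cc - s * (\<tau> * \<beta>)) *\<^sub>R (transpose B *v (B *v dy))
         - (s * (\<tau> * \<beta>) + s * (\<theta> * \<beta>)) *\<^sub>R (transpose B *v r2)"
      unfolding dg r1_eq
      by (simp add: algebra_simps matrix_vector_right_distrib matrix_vector_mult_scaleR del: transpose_matrix_vector)
    also have "\<dots> = H *v dy + ((1 - \<tau>) * \<beta>) *\<^sub>R (transpose B *v (B *v dy)) - (\<tau> * \<beta>) *\<^sub>R (transpose B *v r2)"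
      using c3 c4 by simp
    also have "\<dots> = vv - transpose B *v gk"
      unfolding vv_def gh_def gk_eq r1_eq dy_def
      by (simp add: algebra_simps matrix_vector_right_distrib matrix_vector_mult_scaleR matrix_vector_mult_diff_distrib del: transpose_matrix_vector)
    finally show ?thesis .
  qed
  have Mb: "Mbil G H B \<beta> \<tau> \<theta> (x0 - x1) (y0 - y1) (g0 - g1) (xk - xs) (y1 - ys) (gk - \<gamma>s)
      = uk \<bullet> (xk - xs) + (vv - transpose B *v gk) \<bullet> (y1 - ys) + r2 \<bullet> (gk - \<gamma>s)"
    using Gx P Q unfolding Mbil_def dy_def s_def cc_def kk_def by simp
  have r2_eq: "r2 = A *v (xk - xs) + B *v (y1 - ys)"
    using Fs3 unfolding r2_def by (simp add: matrix_vector_mult_diff_distrib algebra_simps)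
  have "uk \<bullet> (xk - xs) + (vv - transpose B *v gk) \<bullet> (y1 - ys) + r2 \<bullet> (gk - \<gamma>s)
      = (uk + transpose A *v gk - transpose A *v \<gamma>s) \<bullet> (xk - xs) + (vv - transpose B *v \<gamma>s) \<bullet> (y1 - ys)"
    unfolding r2_eq
    by (simp add: inner_add_left inner_diff_left inner_add_right inner_diff_right dot_lmul_matrix
        matrix_vector_mult_diff_distrib algebra_simps inner_commute[of "A *v xk"] inner_commute[of "A *v xs"]
        inner_commute[of "B *v y1"] inner_commute[of "B *v ys"])
  with M1 M2 Mb have Mpos: "Mbil G H B \<beta> \<tau> \<theta> (x0 - x1) (y0 - y1) (g0 - g1) (xk - xs) (y1 - ys) (gk - \<gamma>s) \<ge> 0"
    by simp
  have key: "Mnorm2 G H B \<beta> \<tau> \<theta> (xs - x1) (ys - y1) (\<gamma>s - g1) - Mnorm2 G H B \<beta> \<tau> \<theta> (xs - x0) (ys - y0) (\<gamma>s - g0)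
    - (Mnorm2 G H B \<beta> \<tau> \<theta> (xk - x1) (y1 - y1) (gk - g1) - Mnorm2 G H B \<beta> \<tau> \<theta> (xk - x0) (y1 - y0) (gk - g0))
    = - 2 * Mbil G H B \<beta> \<tau> \<theta> (x0 - x1) (y0 - y1) (g0 - g1) (xk - xs) (y1 - ys) (gk - \<gamma>s)"
    by (rule Mnorm2_key[OF symG symH])
  show ?thesis using key Mpos
    unfolding x0_def x1_def y0_def y1_def g0_def g1_def xk_def gk_def by linarith
qed

end
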